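(* Let $f \in \mathbb{R}[\bar X, \bar Y]$, $\bar X=(X_1,\dots,X_n)$, $\bar Y=(Y_1,\dots,Y_r)$, with $\deg_{\bar X} f = d$ and $\deg_{\bar Y} f = m$. Then for every $\bar x_1, \bar x_2 \in \widetilde\Delta_n$ and every $(\bar y, z)\in C^r$, $$|\bar f(\bar x_1, \bar y, z) - \bar f(\bar x_2, \bar y, z)| \le \frac12 \sqrt{n}\, \|f\|_\bullet \binom{m+r}{r} d(d+1)\, \|\bar x_1 - \bar x_2\|,$$ where $\|\cdot\|$ on $\mathbb{R}^n$ is the Euclidean norm.
   Context: $\widetilde\Delta_n = \{\bar x\in\mathbb{R}^n \mid \sum_i x_i \le 1,\ x_i\ge 0 \text{ for } 1\le i\le n\}$. $C^r = \{(\bar y, z)\in\mathbb{R}^{r+1} \mid y_1^2+\dots+y_r^2+z^2 = 1\}$. For $f = \sum_{\beta\in\mathbb{N}_0^r, |\beta|\le m} f_\beta(\bar X)\bar Y^\beta$ with $\deg_{\bar Y} f = m$, $\bar f = \sum_{|\beta|\le m} f_\beta(\bar X)\bar Y^\beta Z^{m-|\beta|}$ is its homogenization with respect to $\bar Y$ only. The norm $\|\cdot\|_\bullet$: writing $f = \sum_{|\beta|\le m}\sum_{\alpha\in\mathbb{N}_0^n, |\alpha|\le d}\binom{|\alpha|}{\alpha} a_{\alpha,\beta}\bar X^\alpha \bar Y^\beta$, where $|\alpha|=\alpha_1+\dots+\alpha_n$ and $\binom{|\alpha|}{\alpha} = \frac{|\alpha|!}{\alpha_1!\cdots\alpha_n!}$,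 set $\|f\|_\bullet = \max |a_{\alpha,\beta}|$. *)

theory Defs
  imports Complex_Main
begin

text \<open>Polynomials f in R[X_1..X_n, Y_1..Y_r] are represented by their coefficient
  function F :: (nat \<Rightarrow> nat) \<Rightarrow> (nat \<Rightarrow> nat) \<Rightarrow> real, where F alpha beta is the
  coefficient of X^alpha Y^beta; multi-indices are functions nat \<Rightarrow> nat supported on {..<n}.
  Points of R^n are functions nat \<Rightarrow> real, only the coordinates below n matter.\<close>

definition midx :: "nat \<Rightarrow> (nat \<Rightarrow> nat) set" where
  "midx n = {\<alpha>. \<forall>i. n \<le> i \<longrightarrow> \<alpha> i = 0}"

definition mdeg :: "nat \<Rightarrow> (nat \<Rightarrow> nat) \<Rightarrow> nat" where
  "mdeg n \<alpha> = (\<Sum>i<n. \<alpha> i)"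

definition midx_le :: "nat \<Rightarrow> nat \<Rightarrow> (nat \<Rightarrow> nat) set" where
  "midx_le n k = {\<alpha> \<in> midx n. mdeg n \<alpha> \<le> k}"

definition is_poly :: "nat \<Rightarrow> nat \<Rightarrow> ((nat \<Rightarrow> nat) \<Rightarrow> (nat \<Rightarrow> nat) \<Rightarrow> real) \<Rightarrow> bool" where
  "is_poly n r F \<longleftrightarrow> finite {(\<alpha>, \<beta>). F \<alpha> \<beta> \<noteq> 0} \<and>
     (\<forall>\<alpha> \<beta>. F \<alpha> \<beta> \<noteq> 0 \<longrightarrow> \<alpha> \<in> midx n \<and> \<beta> \<in> midx r)"

definition degX :: "nat \<Rightarrow> ((nat \<Rightarrow> nat) \<Rightarrow> (nat \<Rightarrow> nat) \<Rightarrow> real) \<Rightarrow> nat \<Rightarrow> bool" where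
  "degX n F d \<longleftrightarrow> (\<forall>\<alpha> \<beta>. F \<alpha> \<beta> \<noteq> 0 \<longrightarrow> mdeg n \<alpha> \<le> d) \<and> (\<exists>\<alpha> \<beta>. F \<alpha> \<beta> \<noteq> 0 \<and> mdeg n \<alpha> = d)"

definition degY :: "nat \<Rightarrow> ((nat \<Rightarrow> nat) \<Rightarrow> (nat \<Rightarrow> nat) \<Rightarrow> real) \<Rightarrow> nat \<Rightarrow> bool" where
  "degY r F m \<longleftrightarrow> (\<forall>\<alpha> \<beta>. F \<alpha> \<beta> \<noteq> 0 \<longrightarrow> mdeg r \<beta> \<le> m) \<and> (\<exists>\<alpha> \<beta>. F \<alpha> \<beta> \<noteq> 0 \<and> mdeg r \<beta> = m)"

definition multinom :: "nat \<Rightarrow> (nat \<Rightarrow> nat) \<Rightarrow> real" where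
  "multinom n \<alpha> = fact (mdeg n \<alpha>) / (\<Prod>i<n. fact (\<alpha> i))"

text \<open>||f||_bullet = max |a_{alpha,beta}| where F alpha beta = multinom alpha * a_{alpha,beta}.\<close>
definition bnorm :: "nat \<Rightarrow> nat \<Rightarrow> nat \<Rightarrow> nat \<Rightarrow> ((nat \<Rightarrow> nat) \<Rightarrow> (nat \<Rightarrow> nat) \<Rightarrow> real) \<Rightarrow> real" where
  "bnorm n r d m F = Max {\<bar>F \<alpha> \<beta> / multinom n \<alpha>\<bar> | \<alpha> \<beta>. \<alpha> \<in> midx_le n d \<and> \<beta> \<in> midx_le r m}"

definition monom_eval :: "nat \<Rightarrow> (nat \<Rightarrow> real) \<Rightarrow> (nat \<Rightarrow> nat) \<Rightarrow> real" where
  "monom_eval n x \<alpha> = (\<Prod>i<n. x i ^ \<alpha> i)"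

definition homog :: "nat \<Rightarrow> nat \<Rightarrow> nat \<Rightarrow> nat \<Rightarrow> ((nat \<Rightarrow> nat) \<Rightarrow> (nat \<Rightarrow> nat) \<Rightarrow> real)
    \<Rightarrow> (nat \<Rightarrow> real) \<Rightarrow> (nat \<Rightarrow> real) \<Rightarrow> real \<Rightarrow> real" where
  "homog n r d m F x y z = (\<Sum>\<alpha>\<in>midx_le n d. \<Sum>\<beta>\<in>midx_le r m.
      F \<alpha> \<beta> * monom_eval n x \<alpha> * monom_eval r y \<beta> * z ^ (m - mdeg r \<beta>))"

definition simplex_le :: "nat \<Rightarrow> (nat \<Rightarrow> real) set" where
  "simplex_le n = {x. (\<forall>i<n. 0 \<le> x i) \<and> (\<Sum>i<n. x i) \<le> 1}"

definition sphereC :: "nat \<Rightarrow> ((nat \<Rightarrow> real) \<times> real) set" where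
  "sphereC r = {(y, z). (\<Sum>j<r. (y j)\<^sup>2) + z\<^sup>2 = 1}"

definition enorm :: "nat \<Rightarrow> (nat \<Rightarrow> real) \<Rightarrow> real" where
  "enorm n x = sqrt (\<Sum>i<n. (x i)\<^sup>2)"

end

theory Submission
  imports Defs
begin


definition lev :: "nat \<Rightarrow> nat \<Rightarrow> (nat \<Rightarrow> nat) set" where
  "lev n k = {\<alpha> \<in> midx n. mdeg n \<alpha> = k}"

lemma finite_midx_le: "finite (midx_le n d)"
proof -
  have "midx_le n d \<subseteq> {f. \<forall>x. (x \<in> {..<n} \<longrightarrow> f x \<in> {..d}) \<and> (x \<notin> {..<n} \<longrightarrow> f x = 0)}"
  proof
    fix \<alpha> assume a: "\<alpha> \<in> midx_le n d"
    have "\<And>i. i < n \<Longrightarrow> \<alpha> i \<le> d"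
    proof -
      fix i assume "i < n"
      then have "\<alpha> i \<le> (\<Sum>j<n. \<alpha> j)" by (intro member_le_sum) auto
      then show "\<alpha> i \<le> d" using a by (auto simp: midx_le_def mdeg_def)
    qed
    then show "\<alpha> \<in> {f. \<forall>x. (x \<in> {..<n} \<longrightarrow> f x \<in> {..d}) \<and> (x \<notin> {..<n} \<longrightarrow> f x = 0)}"
      using a by (auto simp: midx_le_def midx_def)
  qed
  moreover have "finite {f. \<forall>x. (x \<in> {..<n} \<longrightarrow> f x \<in> {..d}) \<and> (x \<notin> {..<n} \<longrightarrow> f x = (0::nat))}"
    by (rule finite_set_of_finite_funs) auto
  ultimately show ?thesis by (rule finite_subset)
qed

lemma finite_lev: "finite (lev n k)"
  by (rule finite_subset[OF _ finite_midx_le[of n k]]) (auto simp: lev_def midx_le_def)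

lemma lev0: "lev n 0 = {\<lambda>_. 0}"
  by (auto simp: lev_def midx_def mdeg_def fun_eq_iff) (metis not_less lessThan_iff)

lemma prod_upd:
  fixes h :: "nat \<Rightarrow> nat \<Rightarrow> 'a::comm_monoid_mult"
  assumes "i < (n::nat)"
  shows "(\<Prod>j<n. h j ((\<alpha>(i:=v)) j)) * h i (\<alpha> i) = h i v * (\<Prod>j<n. h j (\<alpha> j))"
proof -
  have f: "finite {..<n}" "i \<in> {..<n}" using assms by auto
  have e: "(\<Prod>j\<in>{..<n}-{i}. h j ((\<alpha>(i:=v)) j)) = (\<Prod>j\<in>{..<n}-{i}. h j (\<alpha> j))"
    by (rule prod.cong) auto
  show ?thesis
    unfolding prod.remove[OF f, of "\<lambda>j. h j ((\<alpha>(i:=v)) j)"] prod.remove[OF f, of "\<lambda>j. h j (\<alpha> j)"] e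
    by (simp add: ac_simps)
qed

lemma sum_upd:
  fixes h :: "nat \<Rightarrow> nat \<Rightarrow> 'a::comm_monoid_add"
  assumes "i < (n::nat)"
  shows "(\<Sum>j<n. h j ((\<alpha>(i:=v)) j)) + h i (\<alpha> i) = h i v + (\<Sum>j<n. h j (\<alpha> j))"
proof -
  have f: "finite {..<n}" "i \<in> {..<n}" using assms by auto
  have e: "(\<Sum>j\<in>{..<n}-{i}. h j ((\<alpha>(i:=v)) j)) = (\<Sum>j\<in>{..<n}-{i}. h j (\<alpha> j))"
    by (rule sum.cong) auto
  show ?thesis
    unfolding sum.remove[OF f, of "\<lambda>j. h j ((\<alpha>(i:=v)) j)"] sum.remove[OF f, of "\<lambda>j. h j (\<alpha> j)"] e
    by (simp add: ac_simps)
qed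

lemma monom_upd:
  assumes "i < n"
  shows "monom_eval n x (\<gamma>(i:=\<gamma> i + 1)) = x i * monom_eval n x \<gamma>"
proof -
  have f: "finite {..<n}" "i \<in> {..<n}" using assms by auto
  have e: "(\<Prod>j\<in>{..<n}-{i}. x j ^ ((\<gamma>(i:=\<gamma> i + 1)) j)) = (\<Prod>j\<in>{..<n}-{i}. x j ^ \<gamma> j)"
    by (rule prod.cong) auto
  show ?thesis unfolding monom_eval_def
    prod.remove[OF f, of "\<lambda>j. x j ^ ((\<gamma>(i:=\<gamma> i + 1)) j)"] prod.remove[OF f, of "\<lambda>j. x j ^ \<gamma> j"] e
    by simp
qed

lemma mdeg_upd:
  assumes "i < n" "0 < \<alpha> i"
  shows "mdeg n (\<alpha>(i:=\<alpha> i - 1)) + 1 = mdeg n \<alpha>"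
  using sum_upd[OF assms(1), of "\<lambda>j e. e" \<alpha> "\<alpha> i - 1"] assms(2) unfolding mdeg_def by simp

lemma prodfact_pos: "0 < (\<Prod>j<n. (fact (\<alpha> j) :: real))"
  by (rule prod_pos) auto

lemma multinom_upd:
  assumes "i < n" "0 < \<alpha> i" "mdeg n \<alpha> = Suc k"
  shows "multinom n (\<alpha>(i:=\<alpha> i - 1)) = fact k * real (\<alpha> i) / (\<Prod>j<n. fact (\<alpha> j))"
proof -
  let ?P = "(\<Prod>j<n. (fact (\<alpha> j) :: real))"
  let ?P' = "(\<Prod>j<n. (fact ((\<alpha>(i:=\<alpha> i - 1)) j) :: real))"
  have 1: "?P' * fact (\<alpha> i) = fact (\<alpha> i - 1) * ?P"
    using prod_upd[OF assms(1), of "\<lambda>j e. (fact e :: real)" \<alpha> "\<alpha> i - 1"] by simp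
  have 2: "(fact (\<alpha> i) :: real) = real (\<alpha> i) * fact (\<alpha> i - 1)"
  proof -
    obtain p where p: "\<alpha> i = Suc p" using assms(2) by (cases "\<alpha> i") auto
    show ?thesis unfolding p by (simp add: fact_Suc)
  qed
  have fp: "(fact (\<alpha> i - 1) :: real) > 0" by simp
  have 3: "?P' = ?P / real (\<alpha> i)"
  proof -
    have "?P' * (real (\<alpha> i) * fact (\<alpha> i - 1)) = ?P * fact (\<alpha> i - 1)" using 1 2 by (simp add: ac_simps)
    then have "?P' * real (\<alpha> i) = ?P" using fp by (simp add: ac_simps)
    then show ?thesis using assms(2) by (simp add: eq_divide_eq)
  qed
  have 4: "mdeg n (\<alpha>(i:=\<alpha> i - 1)) = k" using mdeg_upd[of i n \<alpha>, OF assms(1,2)] assms(3) by simp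
  show ?thesis unfolding multinom_def 4 3 using assms(2) by simp
qed

lemma multinom_rec:
  assumes "mdeg n \<alpha> = Suc k"
  shows "multinom n \<alpha> = (\<Sum>i<n. if 0 < \<alpha> i then multinom n (\<alpha>(i:=\<alpha> i - 1)) else 0)"
proof -
  let ?P = "(\<Prod>j<n. (fact (\<alpha> j) :: real))"
  have "(\<Sum>i<n. if 0 < \<alpha> i then multinom n (\<alpha>(i:=\<alpha> i - 1)) else 0)
      = (\<Sum>i<n. fact k * real (\<alpha> i) / ?P)"
    by (rule sum.cong) (use multinom_upd[OF _ _ assms] in auto)
  also have "\<dots> = fact k * real (\<Sum>i<n. \<alpha> i) / ?P"
    by (simp add: sum_divide_distrib[symmetric] sum_distrib_left[symmetric])
  also have "\<dots> = fact (Suc k) / ?P" using assms by (simp add: mdeg_def)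
  finally show ?thesis using assms by (simp add: multinom_def)
qed


lemma lev_step:
  assumes W: "\<And>\<alpha>. W \<alpha> \<ge> (0::real)"
  shows "(\<Sum>\<alpha>\<in>lev n (Suc k). multinom n \<alpha> * W \<alpha>)
     \<le> (\<Sum>i<n. \<Sum>\<gamma>\<in>lev n k. multinom n \<gamma> * W (\<gamma>(i:=\<gamma> i + 1)))"
proof -
  define G where "G = (\<lambda>(i::nat, \<gamma>::nat\<Rightarrow>nat). multinom n \<gamma> * W (\<gamma>(i:=\<gamma> i + 1)))"
  define \<psi> where "\<psi> = (\<lambda>(\<alpha>::nat\<Rightarrow>nat, i::nat). (i, \<alpha>(i:=\<alpha> i - 1)))"
  define S where "S = {p \<in> lev n (Suc k) \<times> {..<n}. 0 < fst p (snd p)}"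
  have fin: "finite (lev n (Suc k) \<times> {..<n})" by (simp add: finite_lev)
  have "(\<Sum>\<alpha>\<in>lev n (Suc k). multinom n \<alpha> * W \<alpha>)
      = (\<Sum>\<alpha>\<in>lev n (Suc k). \<Sum>i<n. (if 0 < \<alpha> i then multinom n (\<alpha>(i:=\<alpha> i - 1)) * W \<alpha> else 0))"
    by (rule sum.cong) (auto simp: multinom_rec lev_def sum_distrib_right intro!: sum.cong)
  also have "\<dots> = (\<Sum>p\<in>lev n (Suc k) \<times> {..<n}. (if 0 < fst p (snd p) then (G \<circ> \<psi>) p else 0))"
  proof -
    have "\<And>(\<alpha>::nat\<Rightarrow>nat) i. 0 < \<alpha> i \<Longrightarrow> (\<alpha>(i := \<alpha> i - 1))(i := \<alpha> i - 1 + 1) = \<alpha>" by (auto simp: fun_eq_iff)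
    then show ?thesis
      by (simp add: sum.cartesian_product, intro sum.cong) (auto simp: G_def \<psi>_def)
  qed
  also have "\<dots> = (\<Sum>p\<in>S. (G \<circ> \<psi>) p)"
    unfolding S_def by (rule sum.inter_filter[OF fin, symmetric])
  also have "\<dots> = (\<Sum>q\<in>\<psi> ` S. G q)"
  proof (rule sum.reindex[symmetric])
    show "inj_on \<psi> S"
    proof
      fix p q assume pq: "p \<in> S" "q \<in> S" "\<psi> p = \<psi> q"
      obtain \<alpha> i where p: "p = (\<alpha>, i)" by (cases p)
      obtain \<beta> j where q: "q = (\<beta>, j)" by (cases q)
      have ai: "0 < \<alpha> i" "0 < \<beta> j" using pq(1,2) p q by (auto simp: S_def)
      have ij: "i = j" and e: "\<alpha>(i:=\<alpha> i - 1) = \<beta>(j:=\<beta> j - 1)" using pq(3) p q by (auto simp: \<psi>_def)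
      have e1: "\<alpha> i - 1 = \<beta> i - 1" using fun_cong[OF e, of i] ij by simp
      have e2: "\<alpha> i = \<beta> i" using e1 ai ij by simp
      have "\<alpha> = \<beta>"
      proof
        fix t show "\<alpha> t = \<beta> t" using fun_cong[OF e, of t] e2 ij by (cases "t = i") auto
      qed
      then show "p = q" using p q ij by simp
    qed
  qed
  also have "\<dots> \<le> (\<Sum>q\<in>{..<n} \<times> lev n k. G q)"
  proof (rule sum_mono2)
    show "finite ({..<n} \<times> lev n k)" by (simp add: finite_lev)
    show "\<psi> ` S \<subseteq> {..<n} \<times> lev n k"
    proof
      fix q assume "q \<in> \<psi> ` S"
      then obtain \<alpha> i where a: "\<alpha> \<in> lev n (Suc k)" "i < n" "0 < \<alpha> i" and q: "q = (i, \<alpha>(i:=\<alpha> i - 1))"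
        unfolding S_def \<psi>_def by auto
      have "\<alpha>(i:=\<alpha> i - 1) \<in> midx n" using a by (auto simp: lev_def midx_def)
      moreover have "mdeg n (\<alpha>(i:=\<alpha> i - 1)) = k" using mdeg_upd[of i n \<alpha>, OF a(2,3)] a(1) by (simp add: lev_def)
      ultimately show "q \<in> {..<n} \<times> lev n k" using q a by (simp add: lev_def)
    qed
    show "\<And>b. b \<in> {..<n} \<times> lev n k - \<psi> ` S \<Longrightarrow> 0 \<le> G b"
      by (auto simp: G_def multinom_def W intro!: mult_nonneg_nonneg divide_nonneg_nonneg prod_nonneg)
  qed
  also have "\<dots> = (\<Sum>i<n. \<Sum>\<gamma>\<in>lev n k. multinom n \<gamma> * W (\<gamma>(i:=\<gamma> i + 1)))"
    by (simp add: sum.cartesian_product G_def)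
  finally show ?thesis .
qed


lemma multinom_nonneg: "0 \<le> multinom n \<alpha>"
  by (auto simp: multinom_def intro!: divide_nonneg_nonneg prod_nonneg)

lemma monom_nonneg: "x \<in> simplex_le n \<Longrightarrow> 0 \<le> monom_eval n x \<alpha>"
  by (auto simp: monom_eval_def simplex_le_def intro!: prod_nonneg)

lemma lev0_sum: "(\<Sum>\<gamma>\<in>lev n 0. multinom n \<gamma> * W \<gamma>) = W (\<lambda>_. 0)"
  by (simp add: lev0 multinom_def mdeg_def)

lemma P_le:
  assumes x: "x \<in> simplex_le n"
  shows "(\<Sum>\<gamma>\<in>lev n k. multinom n \<gamma> * monom_eval n x \<gamma>) \<le> 1"
proof (induction k)
  case 0
  then show ?case by (simp add: lev0_sum monom_eval_def)
next
  case (Suc k)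
  let ?P = "(\<Sum>\<gamma>\<in>lev n k. multinom n \<gamma> * monom_eval n x \<gamma>)"
  have "(\<Sum>\<gamma>\<in>lev n (Suc k). multinom n \<gamma> * monom_eval n x \<gamma>)
     \<le> (\<Sum>i<n. \<Sum>\<gamma>\<in>lev n k. multinom n \<gamma> * monom_eval n x (\<gamma>(i:=\<gamma> i + 1)))"
    by (rule lev_step) (rule monom_nonneg[OF x])
  also have "\<dots> = (\<Sum>i<n. x i * ?P)"
    by (rule sum.cong) (auto simp: monom_upd[simplified] sum_distrib_left ac_simps intro!: sum.cong)
  also have "\<dots> = (\<Sum>i<n. x i) * ?P" by (simp add: sum_distrib_right)
  also have "\<dots> \<le> 1 * 1"
    using x Suc by (intro mult_mono) (auto simp: simplex_le_def intro!: sum_nonneg mult_nonneg_nonneg multinom_nonneg monom_nonneg[OF x])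
  finally show ?case by simp
qed

lemma D_le:
  assumes x1: "x1 \<in> simplex_le n" and x2: "x2 \<in> simplex_le n"
  shows "(\<Sum>\<gamma>\<in>lev n k. multinom n \<gamma> * \<bar>monom_eval n x1 \<gamma> - monom_eval n x2 \<gamma>\<bar>)
     \<le> real k * (\<Sum>i<n. \<bar>x1 i - x2 i\<bar>)"
proof (induction k)
  case 0
  then show ?case by (simp add: lev0_sum monom_eval_def)
next
  case (Suc k)
  let ?D = "(\<Sum>\<gamma>\<in>lev n k. multinom n \<gamma> * \<bar>monom_eval n x1 \<gamma> - monom_eval n x2 \<gamma>\<bar>)"
  let ?P = "(\<Sum>\<gamma>\<in>lev n k. multinom n \<gamma> * monom_eval n x2 \<gamma>)"
  let ?d = "(\<Sum>i<n. \<bar>x1 i - x2 i\<bar>)"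
  have "(\<Sum>\<gamma>\<in>lev n (Suc k). multinom n \<gamma> * \<bar>monom_eval n x1 \<gamma> - monom_eval n x2 \<gamma>\<bar>)
     \<le> (\<Sum>i<n. \<Sum>\<gamma>\<in>lev n k. multinom n \<gamma> * \<bar>monom_eval n x1 (\<gamma>(i:=\<gamma> i + 1)) - monom_eval n x2 (\<gamma>(i:=\<gamma> i + 1))\<bar>)"
    by (rule lev_step) simp
  also have "\<dots> = (\<Sum>i<n. \<Sum>\<gamma>\<in>lev n k. multinom n \<gamma> * \<bar>x1 i * monom_eval n x1 \<gamma> - x2 i * monom_eval n x2 \<gamma>\<bar>)"
    by (rule sum.cong) (auto simp: monom_upd[simplified] intro!: sum.cong)
  also have "\<dots> \<le> (\<Sum>i<n. \<Sum>\<gamma>\<in>lev n k. x1 i * (multinom n \<gamma> * \<bar>monom_eval n x1 \<gamma> - monom_eval n x2 \<gamma>\<bar>)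
        + \<bar>x1 i - x2 i\<bar> * (multinom n \<gamma> * monom_eval n x2 \<gamma>))"
  proof (intro sum_mono)
    fix i \<gamma> assume i: "i \<in> {..<n}"
    have a: "0 \<le> x1 i" using x1 i by (auto simp: simplex_le_def)
    have b: "0 \<le> monom_eval n x2 \<gamma>" by (rule monom_nonneg[OF x2])
    have "\<bar>x1 i * monom_eval n x1 \<gamma> - x2 i * monom_eval n x2 \<gamma>\<bar>
       = \<bar>x1 i * (monom_eval n x1 \<gamma> - monom_eval n x2 \<gamma>) + (x1 i - x2 i) * monom_eval n x2 \<gamma>\<bar>"
      by (simp add: algebra_simps)
    also have "\<dots> \<le> x1 i * \<bar>monom_eval n x1 \<gamma> - monom_eval n x2 \<gamma>\<bar> + \<bar>x1 i - x2 i\<bar> * monom_eval n x2 \<gamma>"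
      using a b by (metis (no_types, lifting) abs_mult abs_of_nonneg abs_triangle_ineq)
    finally have h: "\<bar>x1 i * monom_eval n x1 \<gamma> - x2 i * monom_eval n x2 \<gamma>\<bar> \<le> x1 i * \<bar>monom_eval n x1 \<gamma> - monom_eval n x2 \<gamma>\<bar> + \<bar>x1 i - x2 i\<bar> * monom_eval n x2 \<gamma>" .
    have "multinom n \<gamma> * \<bar>x1 i * monom_eval n x1 \<gamma> - x2 i * monom_eval n x2 \<gamma>\<bar> \<le> multinom n \<gamma> * (x1 i * \<bar>monom_eval n x1 \<gamma> - monom_eval n x2 \<gamma>\<bar> + \<bar>x1 i - x2 i\<bar> * monom_eval n x2 \<gamma>)"
      by (rule mult_left_mono[OF h multinom_nonneg])
    then show "multinom n \<gamma> * \<bar>x1 i * monom_eval n x1 \<gamma> - x2 i * monom_eval n x2 \<gamma>\<bar>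
        \<le> x1 i * (multinom n \<gamma> * \<bar>monom_eval n x1 \<gamma> - monom_eval n x2 \<gamma>\<bar>)
        + \<bar>x1 i - x2 i\<bar> * (multinom n \<gamma> * monom_eval n x2 \<gamma>)"
      by (simp add: algebra_simps)
  qed
  also have "\<dots> = (\<Sum>i<n. x1 i) * ?D + ?d * ?P"
    by (simp add: sum.distrib sum_distrib_left sum_distrib_right sum.swap[of _ "lev n k"])
  also have "\<dots> \<le> 1 * ?D + ?d * 1"
  proof (intro add_mono mult_mono)
    show "(\<Sum>i<n. x1 i) \<le> 1" using x1 by (simp add: simplex_le_def)
    show "?P \<le> 1" by (rule P_le[OF x2])
    show "0 \<le> ?D" by (auto intro!: sum_nonneg mult_nonneg_nonneg multinom_nonneg)
    show "0 \<le> ?d" by (auto intro!: sum_nonneg)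
    show "0 \<le> ?P" by (auto intro!: sum_nonneg mult_nonneg_nonneg multinom_nonneg monom_nonneg[OF x2])
  qed auto
  also have "\<dots> \<le> real (Suc k) * ?d" using Suc by (simp add: algebra_simps)
  finally show ?case .
qed



lemma midx_le0: "midx_le 0 m = {\<lambda>_. 0}"
  by (auto simp: midx_le_def midx_def mdeg_def)

lemma choose_sum_rev: "(\<Sum>j\<le>m. (m - j + r) choose r) = (m + Suc r) choose Suc r"
proof -
  have "(\<Sum>j\<le>m. (m - j + r) choose r) = (\<Sum>k\<le>m. (r + k) choose k)"
  proof -
    have sym: "\<And>k. (r + k) choose k = (k + r) choose r"
      using binomial_symmetric by (metis add.commute add_diff_cancel_right' le_add2)
    show ?thesis unfolding sym
      by (rule sum.reindex_bij_witness[where i="\<lambda>k. m - k" and j="\<lambda>j. m - j"]) auto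
  qed
  also have "\<dots> = Suc (r + m) choose m" by (rule sum_choose_lower)
  also have "\<dots> = (m + Suc r) choose Suc r"
    using binomial_symmetric[of m "Suc (r + m)"] by (simp add: add.commute)
  finally show ?thesis .
qed

lemma card_midx_le: "card (midx_le r m) \<le> (m + r) choose r"
proof (induction r arbitrary: m)
  case 0
  then show ?case by (simp add: midx_le0)
next
  case (Suc r)
  let ?S = "SIGMA j:{..m}. midx_le r (m - j)"
  have sub: "midx_le (Suc r) m \<subseteq> (\<lambda>(j, \<beta>). \<beta>(r:=j)) ` ?S"
  proof
    fix \<beta> assume b: "\<beta> \<in> midx_le (Suc r) m"
    have md: "mdeg (Suc r) \<beta> = mdeg r \<beta> + \<beta> r" by (simp add: mdeg_def)
    have md2: "mdeg r (\<beta>(r:=0)) = mdeg r \<beta>" unfolding mdeg_def by (rule sum.cong) auto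
    have "\<beta>(r:=0) \<in> midx r" using b by (auto simp: midx_le_def midx_def)
    moreover have "\<beta> r \<le> m" "mdeg r (\<beta>(r:=0)) \<le> m - \<beta> r" using b md md2 by (auto simp: midx_le_def)
    ultimately have "(\<beta> r, \<beta>(r:=0)) \<in> ?S" by (simp add: midx_le_def)
    moreover have "\<beta> = (\<lambda>(j, \<beta>). \<beta>(r:=j)) (\<beta> r, \<beta>(r:=0))" by auto
    ultimately show "\<beta> \<in> (\<lambda>(j, \<beta>). \<beta>(r:=j)) ` ?S" by blast
  qed
  have fS: "finite ?S" by (auto simp: finite_midx_le)
  have "card (midx_le (Suc r) m) \<le> card ((\<lambda>(j, \<beta>). \<beta>(r:=j)) ` ?S)"
    by (rule card_mono[OF finite_imageI[OF fS] sub])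
  also have "\<dots> \<le> card ?S" by (rule card_image_le[OF fS])
  also have "\<dots> = (\<Sum>j\<le>m. card (midx_le r (m - j)))" by (simp add: finite_midx_le)
  also have "\<dots> \<le> (\<Sum>j\<le>m. (m - j + r) choose r)" by (intro sum_mono Suc.IH)
  also have "\<dots> = (m + Suc r) choose Suc r" by (rule choose_sum_rev)
  finally show ?case .
qed

lemma sum_abs_le_sqrt:
  fixes a :: "nat \<Rightarrow> real"
  shows "(\<Sum>i<n. \<bar>a i\<bar>) \<le> sqrt (real n) * sqrt (\<Sum>i<n. (a i)\<^sup>2)"
proof -
  have "(\<Sum>i<n. \<bar>a i\<bar>)\<^sup>2 = (\<Sum>i<n. \<Sum>j<n. \<bar>a i\<bar> * \<bar>a j\<bar>)"
    by (simp add: power2_eq_square sum_product)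
  also have "\<dots> \<le> (\<Sum>i<n. \<Sum>j<n. ((a i)\<^sup>2 + (a j)\<^sup>2) / 2)"
  proof (intro sum_mono)
    fix i j
    have "2 * \<bar>a i\<bar> * \<bar>a j\<bar> \<le> \<bar>a i\<bar>\<^sup>2 + \<bar>a j\<bar>\<^sup>2" by (rule sum_squares_bound)
    then show "\<bar>a i\<bar> * \<bar>a j\<bar> \<le> ((a i)\<^sup>2 + (a j)\<^sup>2) / 2" by simp
  qed
  also have "\<dots> = real n * (\<Sum>i<n. (a i)\<^sup>2)"
    by (simp add: sum.distrib sum_divide_distrib[symmetric] add_divide_distrib sum_distrib_left[symmetric])
  finally have h: "(\<Sum>i<n. \<bar>a i\<bar>)\<^sup>2 \<le> real n * (\<Sum>i<n. (a i)\<^sup>2)" .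
  have "(\<Sum>i<n. \<bar>a i\<bar>) = sqrt ((\<Sum>i<n. \<bar>a i\<bar>)\<^sup>2)" by (simp add: sum_nonneg)
  also have "\<dots> \<le> sqrt (real n * (\<Sum>i<n. (a i)\<^sup>2))" using h by (rule real_sqrt_le_mono)
  finally show ?thesis by (simp add: real_sqrt_mult)
qed

lemma gauss_real: "(\<Sum>k\<le>d. real k) = real d * (real d + 1) / 2"
  by (induction d) (auto simp: field_simps)



lemma bnorm_bound:
  assumes "\<alpha> \<in> midx_le n d" "\<beta> \<in> midx_le r m"
  shows "\<bar>F \<alpha> \<beta>\<bar> \<le> bnorm n r d m F * multinom n \<alpha>" and "0 \<le> bnorm n r d m F"
proof -
  have eq: "{\<bar>F \<alpha> \<beta> / multinom n \<alpha>\<bar> | \<alpha> \<beta>. \<alpha> \<in> midx_le n d \<and> \<beta> \<in> midx_le r m}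
     = (\<lambda>(\<alpha>, \<beta>). \<bar>F \<alpha> \<beta> / multinom n \<alpha>\<bar>) ` (midx_le n d \<times> midx_le r m)" by auto
  have fin: "finite {\<bar>F \<alpha> \<beta> / multinom n \<alpha>\<bar> | \<alpha> \<beta>. \<alpha> \<in> midx_le n d \<and> \<beta> \<in> midx_le r m}"
    unfolding eq by (simp add: finite_midx_le)
  have mem: "\<bar>F \<alpha> \<beta> / multinom n \<alpha>\<bar> \<in> (\<lambda>(\<alpha>, \<beta>). \<bar>F \<alpha> \<beta> / multinom n \<alpha>\<bar>) ` (midx_le n d \<times> midx_le r m)"
    by (rule rev_image_eqI[of "(\<alpha>, \<beta>)"]) (use assms in simp_all)
  have le: "\<bar>F \<alpha> \<beta> / multinom n \<alpha>\<bar> \<le> bnorm n r d m F"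
    unfolding bnorm_def eq by (rule Max_ge[OF fin[unfolded eq] mem])
  then show "0 \<le> bnorm n r d m F" by (rule order_trans[OF abs_ge_zero])
  have mp: "0 < multinom n \<alpha>" by (simp add: multinom_def prodfact_pos)
  then show "\<bar>F \<alpha> \<beta>\<bar> \<le> bnorm n r d m F * multinom n \<alpha>"
  proof -
    have "\<bar>F \<alpha> \<beta>\<bar> / multinom n \<alpha> \<le> bnorm n r d m F"
      using le by (simp only: abs_divide abs_of_pos[OF mp])
    then show ?thesis by (simp only: pos_divide_le_eq[OF mp])
  qed
qed

lemma sphere_bound:
  assumes "(y, z) \<in> sphereC r"
  shows "\<bar>monom_eval r y \<beta> * z ^ e\<bar> \<le> 1"
proof -
  have s: "(\<Sum>j<r. (y j)\<^sup>2) + z\<^sup>2 = 1" using assms by (simp add: sphereC_def)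
  have "z\<^sup>2 \<le> 1" using s sum_nonneg[of "{..<r}" "\<lambda>j. (y j)\<^sup>2"] by auto
  then have z: "\<bar>z\<bar> \<le> 1" by (simp add: abs_square_le_1)
  have yj: "\<bar>y j\<bar> \<le> 1" if "j < r" for j
  proof -
    have "(y j)\<^sup>2 \<le> (\<Sum>j<r. (y j)\<^sup>2)" by (rule member_le_sum) (use that in auto)
    moreover have "0 \<le> z\<^sup>2" by simp
    ultimately have "(y j)\<^sup>2 \<le> 1" using s by linarith
    then show ?thesis by (simp add: abs_square_le_1)
  qed
  have "\<bar>monom_eval r y \<beta>\<bar> = (\<Prod>j<r. \<bar>y j\<bar> ^ \<beta> j)" by (simp add: monom_eval_def abs_prod power_abs)
  also have "\<dots> \<le> 1" by (rule prod_le_1) (auto intro: power_le_one yj)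
  finally have "\<bar>monom_eval r y \<beta>\<bar> \<le> 1" .
  moreover have "\<bar>z ^ e\<bar> \<le> 1" using z by (simp add: power_abs power_le_one)
  ultimately show ?thesis by (simp add: abs_mult mult_le_one)
qed

lemma sum_midx_le:
  assumes x1: "x1 \<in> simplex_le n" and x2: "x2 \<in> simplex_le n"
  shows "(\<Sum>\<alpha>\<in>midx_le n d. multinom n \<alpha> * \<bar>monom_eval n x1 \<alpha> - monom_eval n x2 \<alpha>\<bar>)
     \<le> real d * (real d + 1) / 2 * (\<Sum>i<n. \<bar>x1 i - x2 i\<bar>)"
proof -
  let ?h = "\<lambda>\<alpha>. multinom n \<alpha> * \<bar>monom_eval n x1 \<alpha> - monom_eval n x2 \<alpha>\<bar>"
  have "(\<Sum>\<alpha>\<in>midx_le n d. ?h \<alpha>) = (\<Sum>k\<le>d. sum ?h {\<alpha> \<in> midx_le n d. mdeg n \<alpha> = k})"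
    by (rule sum.group[symmetric]) (auto simp: finite_midx_le[unfolded midx_le_def] midx_le_def)
  also have "\<dots> = (\<Sum>k\<le>d. sum ?h (lev n k))"
  proof (rule sum.cong)
    fix k assume "k \<in> {..d}"
    then have "{\<alpha> \<in> midx_le n d. mdeg n \<alpha> = k} = lev n k" by (auto simp: lev_def midx_le_def)
    then show "sum ?h {\<alpha> \<in> midx_le n d. mdeg n \<alpha> = k} = sum ?h (lev n k)" by simp
  qed simp
  also have "\<dots> \<le> (\<Sum>k\<le>d. real k * (\<Sum>i<n. \<bar>x1 i - x2 i\<bar>))"
    by (rule sum_mono) (rule D_le[OF x1 x2])
  also have "\<dots> = real d * (real d + 1) / 2 * (\<Sum>i<n. \<bar>x1 i - x2 i\<bar>)"
    by (simp add: sum_distrib_right[symmetric] gauss_real)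
  finally show ?thesis .
qed

theorem lemma7:
  fixes n r d m :: nat and F :: "(nat \<Rightarrow> nat) \<Rightarrow> (nat \<Rightarrow> nat) \<Rightarrow> real"
  assumes "is_poly n r F" and "degX n F d" and "degY r F m"
    and "x1 \<in> simplex_le n" and "x2 \<in> simplex_le n" and "(y, z) \<in> sphereC r"
  shows "\<bar>homog n r d m F x1 y z - homog n r d m F x2 y z\<bar>
    \<le> 1/2 * sqrt (real n) * bnorm n r d m F * real ((m + r) choose r) * real d * real (d + 1)
       * enorm n (\<lambda>i. x1 i - x2 i)"
proof -
  let ?M = "bnorm n r d m F"
  let ?A = "midx_le n d" and ?B = "midx_le r m"
  let ?w = "\<lambda>\<beta>. monom_eval r y \<beta> * z ^ (m - mdeg r \<beta>)"
  let ?D = "\<lambda>\<alpha>. \<bar>monom_eval n x1 \<alpha> - monom_eval n x2 \<alpha>\<bar>"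
  let ?S = "(\<Sum>\<alpha>\<in>?A. multinom n \<alpha> * ?D \<alpha>)"
  let ?d = "(\<Sum>i<n. \<bar>x1 i - x2 i\<bar>)"
  have M0: "0 \<le> ?M" using bnorm_bound(2)[of "\<lambda>_. 0" n d "\<lambda>_. 0" r m F]
    by (simp add: midx_le_def midx_def mdeg_def)
  have eq: "homog n r d m F x1 y z - homog n r d m F x2 y z
      = (\<Sum>\<alpha>\<in>?A. \<Sum>\<beta>\<in>?B. F \<alpha> \<beta> * (monom_eval n x1 \<alpha> - monom_eval n x2 \<alpha>) * ?w \<beta>)"
    unfolding homog_def sum_subtractf[symmetric] by (intro sum.cong refl) (simp add: algebra_simps)
  have "\<bar>homog n r d m F x1 y z - homog n r d m F x2 y z\<bar>
      = \<bar>\<Sum>\<alpha>\<in>?A. \<Sum>\<beta>\<in>?B. F \<alpha> \<beta> * (monom_eval n x1 \<alpha> - monom_eval n x2 \<alpha>) * ?w \<beta>\<bar>"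
    by (simp only: eq)
  also have "\<dots> \<le> (\<Sum>\<alpha>\<in>?A. \<Sum>\<beta>\<in>?B. \<bar>F \<alpha> \<beta> * (monom_eval n x1 \<alpha> - monom_eval n x2 \<alpha>) * ?w \<beta>\<bar>)"
    by (intro order_trans[OF sum_abs] sum_mono sum_abs)
  also have "\<dots> \<le> (\<Sum>\<alpha>\<in>?A. \<Sum>\<beta>\<in>?B. ?M * (multinom n \<alpha> * ?D \<alpha>))"
  proof (intro sum_mono)
    fix \<alpha> \<beta> assume a: "\<alpha> \<in> ?A" and b: "\<beta> \<in> ?B"
    have "\<bar>F \<alpha> \<beta> * (monom_eval n x1 \<alpha> - monom_eval n x2 \<alpha>) * ?w \<beta>\<bar>
        = \<bar>F \<alpha> \<beta>\<bar> * ?D \<alpha> * \<bar>?w \<beta>\<bar>" by (simp add: abs_mult)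
    also have "\<dots> \<le> \<bar>F \<alpha> \<beta>\<bar> * ?D \<alpha> * 1"
      by (rule mult_left_mono[OF sphere_bound[OF assms(6)]]) simp
    also have "\<dots> \<le> (?M * multinom n \<alpha>) * ?D \<alpha>"
      using bnorm_bound(1)[OF a b, of F] by (simp add: mult_right_mono)
    finally show "\<bar>F \<alpha> \<beta> * (monom_eval n x1 \<alpha> - monom_eval n x2 \<alpha>) * ?w \<beta>\<bar> \<le> ?M * (multinom n \<alpha> * ?D \<alpha>)"
      by (simp add: ac_simps)
  qed
  also have "\<dots> = (\<Sum>\<alpha>\<in>?A. real (card ?B) * (?M * (multinom n \<alpha> * ?D \<alpha>)))"
    by simp
  also have "\<dots> = real (card ?B) * ?M * ?S"
    by (simp only: sum_distrib_left[symmetric] mult.assoc)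
  also have "\<dots> \<le> real ((m + r) choose r) * ?M * (real d * (real d + 1) / 2 * ?d)"
  proof (intro mult_mono)
    show "real (card ?B) \<le> real ((m + r) choose r)" using card_midx_le by simp
    show "?S \<le> real d * (real d + 1) / 2 * ?d" by (rule sum_midx_le[OF assms(4,5)])
    show "0 \<le> ?S" by (auto intro!: sum_nonneg mult_nonneg_nonneg multinom_nonneg)
  qed (use M0 in auto)
  also have "\<dots> \<le> real ((m + r) choose r) * ?M * (real d * (real d + 1) / 2 * (sqrt (real n) * enorm n (\<lambda>i. x1 i - x2 i)))"
  proof (intro mult_left_mono)
    show "?d \<le> sqrt (real n) * enorm n (\<lambda>i. x1 i - x2 i)"
      unfolding enorm_def by (rule sum_abs_le_sqrt)
  qed (use M0 in auto)
  also have "\<dots> = 1/2 * sqrt (real n) * ?M * real ((m + r) choose r) * real d * real (d + 1)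
       * enorm n (\<lambda>i. x1 i - x2 i)"
    by (simp add: field_simps)
  finally show ?thesis .
qed


end
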